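(* In the setting described in the context, for every partial construction map $\zeta'$, $$E'(\zeta')=\sum_{k\in U}w_k\Big(1-\prod_{j\in T_k}\big(1-P^{\zeta'(j)}_{i_kj}\big)\Big).$$
   Context: An SPSC instance: finite sets $S$ (services), $V$ (nodes), $U$ (users); sizes $s_i>0$; capacities $c_j>0$; for each user $k$ a service $i_k\in S$, a set $T_k\subseteq V$, a reward $w_k>0$. Let $\{x_{ij}\},\{y_k\}$ be an optimal solution of the LP with nonnegative variables: maximize $\sum_ky_kw_k$ s.t. $y_k\le\sum_{j\in T_k}x_{i_kj}$, $y_k\le1$; $\sum_ix_{ij}s_i\le c_j$; $x_{ij}=0$ if $s_i>c_j$; $0\le x_{ij}\le1$. Let $\beta:=1/4,\gamma:=1/2,\delta:=1/4$, $\mathbb N=\{1,2,\dots\}$. For $j\in V$: $P_j^\oplus:=\{i:c_j/2<s_i\le c_j\}$, $P_j^\ominus:=\{i:c_j/4<s_i\le c_j/2\}$, $P_j^q:=\{i:\gamma^qc_j\beta<s_i\le\gamma^{q-1}c_j\beta\}$ ($q\in\mathbb N$); $d_j^q:=\sum_{i\in P_j^q}x_{ij}$ for $q\in\mathbb N\cup\{\oplus,\ominus\}$; $v_j:=\delta c_j/\sum_{i:s_i\le c_j\beta}s_ix_{ij}$; $n_j^q:=\lceil v_jd_j^q\rceil$; $h_j:=d_j^\ominus$ if $d_j^\ominus<2$, else $d_j^\ominus/2$. A construction map $\zeta:V\to\{1,2,3\}$ has slot set $\Lambda(\zeta)$ (slot $\sigma$ has node $\nu(\sigma)$, class $\kappa(\sigma)$):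 for each $j$, one slot of class $\oplus$ if $\zeta(j)=1$; two slots of class $\ominus$ if $\zeta(j)=2$; for each $q\in\mathbb N$, $n_j^q$ slots of class $q$ if $\zeta(j)=3$; no other slots on $j$. A slot allocation of $\Lambda$ is $\tau:\Lambda\to S$ with $\tau(\sigma)\in P^{\kappa(\sigma)}_{\nu(\sigma)}$; $X^\tau_i:=\{j:\exists\sigma,\nu(\sigma)=j,\tau(\sigma)=i\}$; $f_\tau(k):=\mathbf 1[T_k\cap X^\tau_{i_k}\ne\emptyset]$. Random experiment: $\zeta(j)$ independent over $j$, equal to $1,2,3$ with probabilities $\delta d_j^\oplus,\ \delta h_j,\ 1-\delta d_j^\oplus-\delta h_j$; given $\zeta$, each slot $\sigma\in\Lambda(\zeta)$ independently gets $\tau(\sigma)=i$ with probability $x_{i\nu(\sigma)}/d^{\kappa(\sigma)}_{\nu(\sigma)}$, $i\in P^{\kappa(\sigma)}_{\nu(\sigma)}$. A partial construction map is $\zeta':V\to\{1,2,3,\emptyset\}$; $M(\zeta')$ is the set of construction maps agreeing with $\zeta'$ wherever $\zeta'(j)\ne\emptyset$; $E'(\zeta'):=\mathbb E[\sum_kf_\tau(k)w_k\mid\zeta\in M(\zeta')]$. For $i\in S$, $j\in V$ define $P^a_{ij}$, $a\in\{1,2,3\}$: if $s_i>c_j$, all are $0$; if $i\in P_j^\oplus$, $P^1_{ij}:=x_{ij}/d_j^\oplus$ and $P^2_{ij}=P^3_{ij}:=0$; if $i\in P_j^\ominus$, $P^2_{ij}:=1-(1-x_{ij}/d_j^\ominus)^2$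 and $P^1_{ij}=P^3_{ij}:=0$; if $i\in P_j^q$ for some $q\in\mathbb N$, $P^3_{ij}:=1-(1-x_{ij}/d_j^q)^{n_j^q}$ and $P^1_{ij}=P^2_{ij}:=0$. Further $P^\emptyset_{ij}:=\delta d_j^\oplus P^1_{ij}+\delta h_jP^2_{ij}+(1-\delta d_j^\oplus-\delta h_j)P^3_{ij}$. *)

theory Defs
  imports "HOL-Probability.Probability"
begin

definition beta_c :: real where "beta_c = 1/4"
definition gamma_c :: real where "gamma_c = 1/2"
definition delta_c :: real where "delta_c = 1/4"

text \<open>SPSC instance: services S, nodes V, users U, sizes s, capacities c,
  requested service svc k (= i_k), node sets T k, rewards w.\<close>
definition spsc_instance ::
  "'s set \<Rightarrow> 'v set \<Rightarrow> 'u set \<Rightarrow> ('s \<Rightarrow> real) \<Rightarrow> ('v \<Rightarrow> real) \<Rightarrow>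
   ('u \<Rightarrow> 's) \<Rightarrow> ('u \<Rightarrow> 'v set) \<Rightarrow> ('u \<Rightarrow> real) \<Rightarrow> bool" where
  "spsc_instance S V U s c svc T w \<longleftrightarrow>
     finite S \<and> finite V \<and> finite U \<and>
     (\<forall>i\<in>S. s i > 0) \<and> (\<forall>j\<in>V. c j > 0) \<and>
     (\<forall>k\<in>U. svc k \<in> S \<and> T k \<subseteq> V \<and> w k > 0)"

definition lp_feasible ::
  "'s set \<Rightarrow> 'v set \<Rightarrow> 'u set \<Rightarrow> ('s \<Rightarrow> real) \<Rightarrow> ('v \<Rightarrow> real) \<Rightarrow>
   ('u \<Rightarrow> 's) \<Rightarrow> ('u \<Rightarrow> 'v set) \<Rightarrow> ('s \<Rightarrow> 'v \<Rightarrow> real) \<Rightarrow> ('u \<Rightarrow> real) \<Rightarrow> bool" where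
  "lp_feasible S V U s c svc T x y \<longleftrightarrow>
     (\<forall>k\<in>U. 0 \<le> y k \<and> y k \<le> 1 \<and> y k \<le> (\<Sum>j\<in>T k. x (svc k) j)) \<and>
     (\<forall>j\<in>V. (\<Sum>i\<in>S. x i j * s i) \<le> c j) \<and>
     (\<forall>i\<in>S. \<forall>j\<in>V. 0 \<le> x i j \<and> x i j \<le> 1 \<and> (s i > c j \<longrightarrow> x i j = 0))"

definition lp_optimal ::
  "'s set \<Rightarrow> 'v set \<Rightarrow> 'u set \<Rightarrow> ('s \<Rightarrow> real) \<Rightarrow> ('v \<Rightarrow> real) \<Rightarrow>
   ('u \<Rightarrow> 's) \<Rightarrow> ('u \<Rightarrow> 'v set) \<Rightarrow> ('u \<Rightarrow> real) \<Rightarrow>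
   ('s \<Rightarrow> 'v \<Rightarrow> real) \<Rightarrow> ('u \<Rightarrow> real) \<Rightarrow> bool" where
  "lp_optimal S V U s c svc T w x y \<longleftrightarrow>
     lp_feasible S V U s c svc T x y \<and>
     (\<forall>x' y'. lp_feasible S V U s c svc T x' y' \<longrightarrow>
        (\<Sum>k\<in>U. y' k * w k) \<le> (\<Sum>k\<in>U. y k * w k))"

text \<open>Classes: Plus (the class \<oplus>), Minus (the class \<ominus>), Lev q for q \<ge> 1.\<close>
datatype cls = Plus | Minus | Lev nat

definition Pcls :: "'s set \<Rightarrow> ('s \<Rightarrow> real) \<Rightarrow> ('v \<Rightarrow> real) \<Rightarrow> 'v \<Rightarrow> cls \<Rightarrow> 's set" where
  "Pcls S s c j \<kappa> = (case \<kappa> of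
      Plus \<Rightarrow> {i\<in>S. c j / 2 < s i \<and> s i \<le> c j}
    | Minus \<Rightarrow> {i\<in>S. c j / 4 < s i \<and> s i \<le> c j / 2}
    | Lev q \<Rightarrow> {i\<in>S. gamma_c ^ q * c j * beta_c < s i \<and> s i \<le> gamma_c ^ (q - 1) * c j * beta_c})"

definition dd :: "'s set \<Rightarrow> ('s \<Rightarrow> real) \<Rightarrow> ('v \<Rightarrow> real) \<Rightarrow> ('s \<Rightarrow> 'v \<Rightarrow> real) \<Rightarrow> 'v \<Rightarrow> cls \<Rightarrow> real" where
  "dd S s c x j \<kappa> = (\<Sum>i\<in>Pcls S s c j \<kappa>. x i j)"

definition vv :: "'s set \<Rightarrow> ('s \<Rightarrow> real) \<Rightarrow> ('v \<Rightarrow> real) \<Rightarrow> ('s \<Rightarrow> 'v \<Rightarrow> real) \<Rightarrow> 'v \<Rightarrow> real" where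
  "vv S s c x j = delta_c * c j / (\<Sum>i\<in>{i\<in>S. s i \<le> c j * beta_c}. s i * x i j)"

definition nn :: "'s set \<Rightarrow> ('s \<Rightarrow> real) \<Rightarrow> ('v \<Rightarrow> real) \<Rightarrow> ('s \<Rightarrow> 'v \<Rightarrow> real) \<Rightarrow> 'v \<Rightarrow> nat \<Rightarrow> nat" where
  "nn S s c x j q = nat \<lceil>vv S s c x j * dd S s c x j (Lev q)\<rceil>"

definition hh :: "'s set \<Rightarrow> ('s \<Rightarrow> real) \<Rightarrow> ('v \<Rightarrow> real) \<Rightarrow> ('s \<Rightarrow> 'v \<Rightarrow> real) \<Rightarrow> 'v \<Rightarrow> real" where
  "hh S s c x j = (if dd S s c x j Minus < 2 then dd S s c x j Minus else dd S s c x j Minus / 2)"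

text \<open>Values of a construction map: C1, C2, C3 stand for 1, 2, 3.
  A partial construction map has values in cval option (None = \<emptyset>).\<close>
datatype cval = C1 | C2 | C3

type_synonym 'v slot = "'v \<times> cls \<times> nat"

definition slots :: "'s set \<Rightarrow> ('s \<Rightarrow> real) \<Rightarrow> ('v \<Rightarrow> real) \<Rightarrow> ('s \<Rightarrow> 'v \<Rightarrow> real) \<Rightarrow>
    'v set \<Rightarrow> ('v \<Rightarrow> cval) \<Rightarrow> 'v slot set" where
  "slots S s c x V \<zeta> =
     {(j, Plus, 0) | j. j \<in> V \<and> \<zeta> j = C1}
   \<union> {(j, Minus, m) | j m. j \<in> V \<and> \<zeta> j = C2 \<and> m < 2}
   \<union> {(j, Lev q, m) | j q m. j \<in> V \<and> \<zeta> j = C3 \<and> 1 \<le> q \<and> m < nn S s c x j q}"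

definition Xset :: "'v slot set \<Rightarrow> ('v slot \<Rightarrow> 's) \<Rightarrow> 's \<Rightarrow> 'v set" where
  "Xset L \<tau> i = {j. \<exists>\<sigma>\<in>L. fst \<sigma> = j \<and> \<tau> \<sigma> = i}"

definition ftau :: "'v slot set \<Rightarrow> ('v slot \<Rightarrow> 's) \<Rightarrow> ('u \<Rightarrow> 's) \<Rightarrow> ('u \<Rightarrow> 'v set) \<Rightarrow> 'u \<Rightarrow> real" where
  "ftau L \<tau> svc T k = (if T k \<inter> Xset L \<tau> (svc k) \<noteq> {} then 1 else 0)"

definition node_pmf :: "'s set \<Rightarrow> ('s \<Rightarrow> real) \<Rightarrow> ('v \<Rightarrow> real) \<Rightarrow> ('s \<Rightarrow> 'v \<Rightarrow> real) \<Rightarrow> 'v \<Rightarrow> cval pmf" where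
  "node_pmf S s c x j = embed_pmf (\<lambda>a. case a of
       C1 \<Rightarrow> delta_c * dd S s c x j Plus
     | C2 \<Rightarrow> delta_c * hh S s c x j
     | C3 \<Rightarrow> 1 - delta_c * dd S s c x j Plus - delta_c * hh S s c x j)"

definition zeta_pmf :: "'s set \<Rightarrow> ('s \<Rightarrow> real) \<Rightarrow> ('v \<Rightarrow> real) \<Rightarrow> ('s \<Rightarrow> 'v \<Rightarrow> real) \<Rightarrow> 'v set \<Rightarrow> ('v \<Rightarrow> cval) pmf" where
  "zeta_pmf S s c x V = Pi_pmf V C3 (node_pmf S s c x)"

definition slot_pmf :: "'s set \<Rightarrow> ('s \<Rightarrow> real) \<Rightarrow> ('v \<Rightarrow> real) \<Rightarrow> ('s \<Rightarrow> 'v \<Rightarrow> real) \<Rightarrow> 'v slot \<Rightarrow> 's pmf" where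
  "slot_pmf S s c x \<sigma> = embed_pmf (\<lambda>i.
      if i \<in> Pcls S s c (fst \<sigma>) (fst (snd \<sigma>))
      then x i (fst \<sigma>) / dd S s c x (fst \<sigma>) (fst (snd \<sigma>)) else 0)"

definition tau_pmf :: "'s set \<Rightarrow> ('s \<Rightarrow> real) \<Rightarrow> ('v \<Rightarrow> real) \<Rightarrow> ('s \<Rightarrow> 'v \<Rightarrow> real) \<Rightarrow> 'v set \<Rightarrow>
    ('v \<Rightarrow> cval) \<Rightarrow> ('v slot \<Rightarrow> 's) pmf" where
  "tau_pmf S s c x V \<zeta> = Pi_pmf (slots S s c x V \<zeta>) undefined (slot_pmf S s c x)"

definition spsc_experiment :: "'s set \<Rightarrow> ('s \<Rightarrow> real) \<Rightarrow> ('v \<Rightarrow> real) \<Rightarrow> ('s \<Rightarrow> 'v \<Rightarrow> real) \<Rightarrow> 'v set \<Rightarrow>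
    (('v \<Rightarrow> cval) \<times> ('v slot \<Rightarrow> 's)) pmf" where
  "spsc_experiment S s c x V =
     bind_pmf (zeta_pmf S s c x V) (\<lambda>\<zeta>. map_pmf (\<lambda>\<tau>. (\<zeta>, \<tau>)) (tau_pmf S s c x V \<zeta>))"

definition Mset :: "'v set \<Rightarrow> ('v \<Rightarrow> cval option) \<Rightarrow> ('v \<Rightarrow> cval) set" where
  "Mset V \<zeta>' = {\<zeta>. \<forall>j\<in>V. case \<zeta>' j of None \<Rightarrow> True | Some a \<Rightarrow> \<zeta> j = a}"

definition total_reward :: "'s set \<Rightarrow> ('s \<Rightarrow> real) \<Rightarrow> ('v \<Rightarrow> real) \<Rightarrow> ('s \<Rightarrow> 'v \<Rightarrow> real) \<Rightarrow> 'v set \<Rightarrow>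
    'u set \<Rightarrow> ('u \<Rightarrow> 's) \<Rightarrow> ('u \<Rightarrow> 'v set) \<Rightarrow> ('u \<Rightarrow> real) \<Rightarrow>
    ('v \<Rightarrow> cval) \<Rightarrow> ('v slot \<Rightarrow> 's) \<Rightarrow> real" where
  "total_reward S s c x V U svc T w \<zeta> \<tau> =
     (\<Sum>k\<in>U. ftau (slots S s c x V \<zeta>) \<tau> svc T k * w k)"

definition Eprime :: "'s set \<Rightarrow> ('s \<Rightarrow> real) \<Rightarrow> ('v \<Rightarrow> real) \<Rightarrow> ('s \<Rightarrow> 'v \<Rightarrow> real) \<Rightarrow> 'v set \<Rightarrow>
    'u set \<Rightarrow> ('u \<Rightarrow> 's) \<Rightarrow> ('u \<Rightarrow> 'v set) \<Rightarrow> ('u \<Rightarrow> real) \<Rightarrow> ('v \<Rightarrow> cval option) \<Rightarrow> real" where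
  "Eprime S s c x V U svc T w \<zeta>' =
     measure_pmf.expectation
       (cond_pmf (spsc_experiment S s c x V) {(\<zeta>, \<tau>). \<zeta> \<in> Mset V \<zeta>'})
       (\<lambda>(\<zeta>, \<tau>). total_reward S s c x V U svc T w \<zeta> \<tau>)"

definition Pval :: "'s set \<Rightarrow> ('s \<Rightarrow> real) \<Rightarrow> ('v \<Rightarrow> real) \<Rightarrow> ('s \<Rightarrow> 'v \<Rightarrow> real) \<Rightarrow>
    cval \<Rightarrow> 's \<Rightarrow> 'v \<Rightarrow> real" where
  "Pval S s c x a i j =
     (if s i > c j then 0
      else (case a of
        C1 \<Rightarrow> (if i \<in> Pcls S s c j Plus then x i j / dd S s c x j Plus else 0)
      | C2 \<Rightarrow> (if i \<in> Pcls S s c j Minus then 1 - (1 - x i j / dd S s c x j Minus) ^ 2 else 0)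
      | C3 \<Rightarrow> (if \<exists>q\<ge>1. i \<in> Pcls S s c j (Lev q)
               then (let q = (SOME q. 1 \<le> q \<and> i \<in> Pcls S s c j (Lev q)) in
                     1 - (1 - x i j / dd S s c x j (Lev q)) ^ nn S s c x j q)
               else 0)))"

definition Pgen :: "'s set \<Rightarrow> ('s \<Rightarrow> real) \<Rightarrow> ('v \<Rightarrow> real) \<Rightarrow> ('s \<Rightarrow> 'v \<Rightarrow> real) \<Rightarrow>
    cval option \<Rightarrow> 's \<Rightarrow> 'v \<Rightarrow> real" where
  "Pgen S s c x a i j = (case a of
      Some b \<Rightarrow> Pval S s c x b i j
    | None \<Rightarrow> delta_c * dd S s c x j Plus * Pval S s c x C1 i j
            + delta_c * hh S s c x j * Pval S s c x C2 i j
            + (1 - delta_c * dd S s c x j Plus - delta_c * hh S s c x j) * Pval S s c x C3 i j)"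

end

theory Submission
  imports Defs
begin



lemma pmf_bind_pair:
  "pmf (bind_pmf Z (\<lambda>z. map_pmf (Pair z) (K z))) (a,b) = pmf Z a * pmf (K a) b"
proof -
  have eq: "pmf (map_pmf (Pair z) (K z)) (a,b) = indicator {a} z * pmf (K a) b" for z
  proof (cases "z = a")
    case True
    then show ?thesis by (simp add: pmf_map_inj' inj_on_def)
  next
    case False
    then have "(a,b) \<notin> set_pmf (map_pmf (Pair z) (K z))" by auto
    then show ?thesis using False by (simp add: pmf_eq_0_set_pmf)
  qed
  have "pmf (bind_pmf Z (\<lambda>z. map_pmf (Pair z) (K z))) (a,b) = (\<integral>z. indicator {a} z * pmf (K a) b \<partial>Z)"
    by (simp add: pmf_bind eq)
  also have "\<dots> = pmf Z a * pmf (K a) b"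
    by (simp add: measure_pmf_single)
  finally show ?thesis .
qed

lemma map_fst_bind_pair:
  "map_pmf fst (bind_pmf Z (\<lambda>z. map_pmf (Pair z) (K z))) = Z"
  by (simp add: map_bind_pmf pmf.map_comp o_def bind_return_pmf')

lemma cond_bind_pair:
  assumes "set_pmf Z \<inter> M \<noteq> {}"
  shows "cond_pmf (bind_pmf Z (\<lambda>z. map_pmf (Pair z) (K z))) {(z,t). z \<in> M}
       = bind_pmf (cond_pmf Z M) (\<lambda>z. map_pmf (Pair z) (K z))"
proof -
  let ?B = "bind_pmf Z (\<lambda>z. map_pmf (Pair z) (K z))"
  have A: "{(z,t). z \<in> M} = fst -` M" by auto
  have meas: "measure ?B {(z,t). z \<in> M} = measure Z M"
    using map_fst_bind_pair[of Z K] by (metis A measure_map_pmf)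
  have ne: "set_pmf ?B \<inter> {(z,t). z \<in> M} \<noteq> {}"
    using assms meas by (metis measure_pmf_zero_iff)
  show ?thesis
  proof (rule pmf_eqI)
    fix p :: "'a \<times> 'b" obtain a b where p: "p = (a,b)" by force
    show "pmf (cond_pmf ?B {(z,t). z \<in> M}) p = pmf (bind_pmf (cond_pmf Z M) (\<lambda>z. map_pmf (Pair z) (K z))) p"
      unfolding p pmf_cond[OF ne] pmf_bind_pair pmf_cond[OF assms] meas by auto
  qed
qed

lemma integral_bind_pmf_bounded:
  fixes f :: "'b \<Rightarrow> real"
  assumes "\<And>y. 0 \<le> f y" "\<And>y. f y \<le> B"
  shows "measure_pmf.expectation (bind_pmf M N) f = measure_pmf.expectation M (\<lambda>x. measure_pmf.expectation (N x) f)"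
proof -
  have int: "integrable (measure_pmf P) f" for P
    by (rule measure_pmf.integrable_const_bound[where B=B]) (use assms in auto)
  have nn: "0 \<le> measure_pmf.expectation (N x) f" for x
    using assms by (simp add: integral_nonneg)
  have le: "measure_pmf.expectation (N x) f \<le> B" for x
  proof -
    have "measure_pmf.expectation (N x) f \<le> measure_pmf.expectation (N x) (\<lambda>_. B)"
      by (rule integral_mono) (use int assms in auto)
    then show ?thesis by simp
  qed
  have int2: "integrable (measure_pmf M) (\<lambda>x. measure_pmf.expectation (N x) f)"
    by (rule measure_pmf.integrable_const_bound[where B=B]) (use nn le in auto)
  have "ennreal (measure_pmf.expectation (bind_pmf M N) f) = (\<integral>\<^sup>+y. ennreal (f y) \<partial>bind_pmf M N)"
    by (rule nn_integral_eq_integral[symmetric]) (use int assms in auto)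
  also have "\<dots> = (\<integral>\<^sup>+x. \<integral>\<^sup>+y. ennreal (f y) \<partial>N x \<partial>M)" by simp
  also have "\<dots> = (\<integral>\<^sup>+x. ennreal (measure_pmf.expectation (N x) f) \<partial>M)"
    by (intro nn_integral_cong nn_integral_eq_integral) (use int assms in auto)
  also have "\<dots> = ennreal (measure_pmf.expectation M (\<lambda>x. measure_pmf.expectation (N x) f))"
    by (rule nn_integral_eq_integral) (use int2 nn in auto)
  finally show ?thesis
    using nn by (simp add: integral_nonneg ennreal_inj assms)
qed

lemma cond_Pi_pmf:
  assumes fin: "finite A" and ne: "\<And>j. j \<in> A \<Longrightarrow> set_pmf (p j) \<inter> B j \<noteq> {}"
  shows "cond_pmf (Pi_pmf A d p) (Pi A B) = Pi_pmf A d (\<lambda>j. cond_pmf (p j) (B j))"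
proof -
  have mP: "measure (Pi_pmf A d p) (Pi A B) = (\<Prod>j\<in>A. measure (p j) (B j))"
    using fin by (rule measure_Pi_pmf_Pi)
  have pos: "measure (p j) (B j) > 0" if "j \<in> A" for j
    using ne[OF that] measure_pmf_zero_iff[of "p j" "B j"] by (simp add: zero_less_measure_iff)
  have "measure (Pi_pmf A d p) (Pi A B) > 0" unfolding mP using pos by (simp add: prod_pos)
  then have ne2: "set_pmf (Pi_pmf A d p) \<inter> Pi A B \<noteq> {}"
    using measure_pmf_zero_iff by (metis less_irrefl)
  show ?thesis
  proof (rule pmf_eqI)
    fix f
    show "pmf (cond_pmf (Pi_pmf A d p) (Pi A B)) f = pmf (Pi_pmf A d (\<lambda>j. cond_pmf (p j) (B j))) f"
    proof (cases "f \<in> Pi A B")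
      case True
      have e: "pmf (cond_pmf (p j) (B j)) (f j) = pmf (p j) (f j) / measure (p j) (B j)" if "j \<in> A" for j
        using pmf_cond[OF ne[OF that]] True that by auto
      have "(\<Prod>j\<in>A. pmf (cond_pmf (p j) (B j)) (f j)) = (\<Prod>j\<in>A. pmf (p j) (f j)) / (\<Prod>j\<in>A. measure (p j) (B j))"
        by (simp add: e prod_dividef)
      then show ?thesis
        unfolding pmf_cond[OF ne2] pmf_Pi[OF fin] mP using True by auto
    next
      case False
      then obtain j where "j \<in> A" "f j \<notin> B j" by auto
      then show ?thesis
        unfolding pmf_cond[OF ne2] pmf_Pi[OF fin] using False fin
        by (auto simp: pmf_cond[OF ne] intro!: prod_zero)
    qed
  qed
qed




lemma UNIV_cval: "(UNIV :: cval set) = {C1, C2, C3}"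
  using cval.exhaust by auto

lemma finite_cval[simp]: "finite (UNIV :: cval set)"
  by (simp add: UNIV_cval)

locale spsc =
  fixes S :: "'s set" and V :: "'v set" and U :: "'u set"
    and s :: "'s \<Rightarrow> real" and c :: "'v \<Rightarrow> real"
    and svc :: "'u \<Rightarrow> 's" and T :: "'u \<Rightarrow> 'v set" and w :: "'u \<Rightarrow> real"
    and x :: "'s \<Rightarrow> 'v \<Rightarrow> real" and y :: "'u \<Rightarrow> real"
  assumes inst: "spsc_instance S V U s c svc T w"
    and feas: "lp_feasible S V U s c svc T x y"
begin

lemma finS: "finite S" and finV: "finite V" and finU: "finite U"
  using inst by (auto simp: spsc_instance_def)

lemma spos: "i \<in> S \<Longrightarrow> s i > 0" and cpos: "j \<in> V \<Longrightarrow> c j > 0"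
  using inst by (auto simp: spsc_instance_def)

lemma svcS: "k \<in> U \<Longrightarrow> svc k \<in> S" and TV: "k \<in> U \<Longrightarrow> T k \<subseteq> V" and wpos: "k \<in> U \<Longrightarrow> w k > 0"
  using inst by (auto simp: spsc_instance_def)

lemma xnn: "i \<in> S \<Longrightarrow> j \<in> V \<Longrightarrow> 0 \<le> x i j"
  using feas by (auto simp: lp_feasible_def)

lemma cap: "j \<in> V \<Longrightarrow> (\<Sum>i\<in>S. x i j * s i) \<le> c j"
  using feas by (auto simp: lp_feasible_def)

abbreviation "P j \<kappa> \<equiv> Pcls S s c j \<kappa>"
abbreviation "d j \<kappa> \<equiv> dd S s c x j \<kappa>"

lemma Pcls_sub: "P j \<kappa> \<subseteq> S"
  by (cases \<kappa>) (auto simp: Pcls_def)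

lemma finP: "finite (P j \<kappa>)"
  using Pcls_sub finS finite_subset by blast

lemma xnnP: "j \<in> V \<Longrightarrow> i \<in> P j \<kappa> \<Longrightarrow> 0 \<le> x i j"
  using Pcls_sub xnn by blast

lemma dd_nonneg: "j \<in> V \<Longrightarrow> 0 \<le> d j \<kappa>"
  unfolding dd_def using xnnP by (intro sum_nonneg) auto

lemma x_le_dd: "j \<in> V \<Longrightarrow> i \<in> P j \<kappa> \<Longrightarrow> x i j \<le> d j \<kappa>"
  unfolding dd_def using xnnP finP by (intro member_le_sum) auto

lemma dd_pos_ne: "d j \<kappa> \<noteq> 0 \<Longrightarrow> P j \<kappa> \<noteq> {}"
  unfolding dd_def by auto

lemma cap_bound: assumes j: "j \<in> V" shows "2 * d j Plus + d j Minus \<le> 4"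
proof -
  have disj: "P j Plus \<inter> P j Minus = {}" by (auto simp: Pcls_def)
  have "(\<Sum>i\<in>P j Plus. x i j * (c j / 2)) + (\<Sum>i\<in>P j Minus. x i j * (c j / 4))
      \<le> (\<Sum>i\<in>P j Plus. x i j * s i) + (\<Sum>i\<in>P j Minus. x i j * s i)"
    apply (intro add_mono sum_mono mult_left_mono)
    using xnn j Pcls_sub by (auto simp: Pcls_def)
  also have "\<dots> = (\<Sum>i\<in>P j Plus \<union> P j Minus. x i j * s i)"
    using disj finP by (simp add: sum.union_disjoint)
  also have "\<dots> \<le> (\<Sum>i\<in>S. x i j * s i)"
    apply (rule sum_mono2[OF finS])
    using Pcls_sub j by (auto intro!: mult_nonneg_nonneg xnn simp: less_imp_le spos)
  also have "\<dots> \<le> c j" using cap j .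
  finally have "(c j / 4) * (2 * d j Plus + d j Minus) \<le> (c j / 4) * 4"
    by (simp add: dd_def sum_distrib_right sum_distrib_left algebra_simps sum_divide_distrib[symmetric])
  then show ?thesis using cpos[OF j] by simp
qed

abbreviation "h j \<equiv> hh S s c x j"

lemma hh_nonneg: "j \<in> V \<Longrightarrow> 0 \<le> h j"
  using dd_nonneg by (auto simp: hh_def)

lemma hh_pos_iff: "j \<in> V \<Longrightarrow> h j > 0 \<longleftrightarrow> d j Minus > 0"
  by (auto simp: hh_def)

lemma node_sum: "j \<in> V \<Longrightarrow> delta_c * d j Plus + delta_c * h j \<le> 1"
  using cap_bound[of j] dd_nonneg[of j] by (auto simp: hh_def delta_c_def)

lemma pmf_node:
  assumes j: "j \<in> V"
  shows "pmf (node_pmf S s c x j) a = (case a of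
       C1 \<Rightarrow> delta_c * d j Plus
     | C2 \<Rightarrow> delta_c * h j
     | C3 \<Rightarrow> 1 - delta_c * d j Plus - delta_c * h j)"
  unfolding node_pmf_def
proof (rule pmf_embed_pmf)
  show "0 \<le> (case a of
       C1 \<Rightarrow> delta_c * d j Plus
     | C2 \<Rightarrow> delta_c * h j
     | C3 \<Rightarrow> 1 - delta_c * d j Plus - delta_c * h j)" for a
    using node_sum[OF j] dd_nonneg[OF j] hh_nonneg[OF j] by (cases a) (auto simp: delta_c_def)
  then show "(\<integral>\<^sup>+ a. ennreal (case a of
       C1 \<Rightarrow> delta_c * d j Plus
     | C2 \<Rightarrow> delta_c * h j
     | C3 \<Rightarrow> 1 - delta_c * d j Plus - delta_c * h j) \<partial>count_space UNIV) = 1"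
  proof -
    have a: "0 \<le> delta_c * d j Plus" "0 \<le> delta_c * h j" "0 \<le> 1 - delta_c * d j Plus - delta_c * h j"
      using node_sum[OF j] dd_nonneg[OF j] hh_nonneg[OF j] by (auto simp: delta_c_def)
    have e1: "ennreal (delta_c * h j) + ennreal (1 - delta_c * d j Plus - delta_c * h j)
       = ennreal (delta_c * h j + (1 - delta_c * d j Plus - delta_c * h j))"
      by (rule ennreal_plus[symmetric]) (use a in auto)
    have e2: "ennreal (delta_c * d j Plus) + ennreal (delta_c * h j + (1 - delta_c * d j Plus - delta_c * h j))
       = ennreal (delta_c * d j Plus + (delta_c * h j + (1 - delta_c * d j Plus - delta_c * h j)))"
      by (rule ennreal_plus[symmetric]) (use a in auto)
    have "ennreal (delta_c * d j Plus) + (ennreal (delta_c * h j) + ennreal (1 - delta_c * d j Plus - delta_c * h j))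
       = 1" unfolding e1 e2 by simp
    then show ?thesis
      by (simp add: nn_integral_count_space_finite UNIV_cval del: sum_ennreal)
  qed
qed

lemma pmf_slot:
  assumes j: "j \<in> V" and pos: "d j \<kappa> > 0"
  shows "pmf (slot_pmf S s c x (j, \<kappa>, m)) i = (if i \<in> P j \<kappa> then x i j / d j \<kappa> else 0)"
  unfolding slot_pmf_def fst_conv snd_conv
proof (rule pmf_embed_pmf)
  show nn: "0 \<le> (if i \<in> P j \<kappa> then x i j / d j \<kappa> else 0)" for i
    using xnnP[OF j] pos by auto
  have "(\<integral>\<^sup>+ i. ennreal (if i \<in> P j \<kappa> then x i j / d j \<kappa> else 0) \<partial>count_space UNIV)
      = (\<Sum>i\<in>P j \<kappa>. ennreal (if i \<in> P j \<kappa> then x i j / d j \<kappa> else 0))"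
    by (rule nn_integral_count_space') (auto simp: finP)
  also have "\<dots> = ennreal (\<Sum>i\<in>P j \<kappa>. (if i \<in> P j \<kappa> then x i j / d j \<kappa> else 0))"
    using nn by (rule sum_ennreal)
  also have "(\<Sum>i\<in>P j \<kappa>. (if i \<in> P j \<kappa> then x i j / d j \<kappa> else 0)) = 1"
    using pos by (simp add: sum_divide_distrib[symmetric] dd_def)
  finally show "(\<integral>\<^sup>+ i. ennreal (if i \<in> P j \<kappa> then x i j / d j \<kappa> else 0) \<partial>count_space UNIV) = 1"
    by simp
qed

lemma Lev_le: "1 \<le> q1 \<Longrightarrow> q1 < q2 \<Longrightarrow> j \<in> V \<Longrightarrow> i \<in> P j (Lev q1) \<Longrightarrow> i \<in> P j (Lev q2) \<Longrightarrow> False"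
proof -
  assume q: "1 \<le> q1" "q1 < q2" and j: "j \<in> V" and i1: "i \<in> P j (Lev q1)" and i2: "i \<in> P j (Lev q2)"
  have "(1/2::real) ^ (q2 - 1) \<le> (1/2) ^ q1"
    using q by (intro power_decreasing) auto
  then have "(1/2::real) ^ (q2 - 1) * c j * (1/4) \<le> (1/2) ^ q1 * c j * (1/4)"
    using cpos[OF j] by (intro mult_right_mono) auto
  then show False using i1 i2 by (auto simp: Pcls_def gamma_c_def beta_c_def)
qed

lemma Lev_unique: "1 \<le> q1 \<Longrightarrow> 1 \<le> q2 \<Longrightarrow> j \<in> V \<Longrightarrow> i \<in> P j (Lev q1) \<Longrightarrow> i \<in> P j (Lev q2) \<Longrightarrow> q1 = q2"
  using Lev_le by (metis linorder_neqE_nat)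

end



context spsc begin

abbreviation "n j q \<equiv> nn S s c x j q"

definition NS :: "'v \<Rightarrow> cval \<Rightarrow> 'v slot set" where
  "NS j a = (case a of C1 \<Rightarrow> {(j,Plus,0)} | C2 \<Rightarrow> {(j,Minus,0),(j,Minus,1)}
     | C3 \<Rightarrow> {(j, Lev q, m) | q m. 1 \<le> q \<and> m < n j q})"

lemma nn_pos_dd: "0 < n j q \<Longrightarrow> d j (Lev q) \<noteq> 0"
  by (auto simp: nn_def)

lemma nn_pos_dd': "j \<in> V \<Longrightarrow> 0 < n j q \<Longrightarrow> d j (Lev q) > 0"
  using nn_pos_dd dd_nonneg by (metis less_eq_real_def)

lemma finite_Qs: assumes j: "j \<in> V" shows "finite {q. 1 \<le> q \<and> i \<in> P j (Lev q)}"
proof (cases "\<exists>q. 1 \<le> q \<and> i \<in> P j (Lev q)")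
  case True
  then obtain q0 where q0: "1 \<le> q0" "i \<in> P j (Lev q0)" by blast
  have "{q. 1 \<le> q \<and> i \<in> P j (Lev q)} = {q0}"
    using Lev_unique[OF _ q0(1) j _ q0(2)] q0 by blast
  then show ?thesis by simp
next
  case False
  then have "{q. 1 \<le> q \<and> i \<in> P j (Lev q)} = {}" by blast
  then show ?thesis by (metis finite.emptyI)
qed

lemma finite_NS: assumes j: "j \<in> V" shows "finite (NS j a)"
proof (cases a)
  case C3
  let ?Q = "\<Union>i\<in>S. {q. 1 \<le> q \<and> i \<in> P j (Lev q)}"
  have fQ: "finite ?Q" using finS finite_Qs[OF j] by blast
  have "NS j C3 \<subseteq> (\<lambda>(q,m). (j, Lev q, m)) ` (SIGMA q:?Q. {..<n j q})"
  proof
    fix \<sigma> assume "\<sigma> \<in> NS j C3"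
    then obtain q m where \<sigma>: "\<sigma> = (j, Lev q, m)" "1 \<le> q" "m < n j q" by (auto simp: NS_def)
    then have "d j (Lev q) \<noteq> 0" using nn_pos_dd by simp
    then obtain i where "i \<in> P j (Lev q)" using dd_pos_ne by blast
    moreover then have "i \<in> S" using Pcls_sub by blast
    ultimately show "\<sigma> \<in> (\<lambda>(q,m). (j, Lev q, m)) ` (SIGMA q:?Q. {..<n j q})"
      using \<sigma> by force
  qed
  moreover have "finite ((\<lambda>(q,m). (j, Lev q, m)) ` (SIGMA q:?Q. {..<n j q}))"
    using fQ by auto
  ultimately show ?thesis using C3 finite_subset by blast
qed (auto simp: NS_def)

lemma slots_at: assumes j: "j \<in> V" shows "{\<sigma>\<in>slots S s c x V \<zeta>. fst \<sigma> = j} = NS j (\<zeta> j)"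
proof (cases "\<zeta> j")
  case C1
  then show ?thesis using j by (auto simp: slots_def NS_def)
next
  case C2
  then show ?thesis using j by (auto simp: slots_def NS_def less_2_cases_iff)
next
  case C3
  then show ?thesis using j by (auto simp: slots_def NS_def)
qed

lemma slots_fst: "\<sigma> \<in> slots S s c x V \<zeta> \<Longrightarrow> fst \<sigma> \<in> V"
  by (auto simp: slots_def)

lemma slots_finite: "finite (slots S s c x V \<zeta>)"
proof -
  have "slots S s c x V \<zeta> = (\<Union>j\<in>V. {\<sigma>\<in>slots S s c x V \<zeta>. fst \<sigma> = j})"
    using slots_fst by blast
  also have "\<dots> = (\<Union>j\<in>V. NS j (\<zeta> j))" using slots_at by simp
  finally show ?thesis using finV finite_NS by simp
qed

definition good :: "'v \<Rightarrow> cval \<Rightarrow> bool" where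
  "good j a \<longleftrightarrow> (a = C1 \<longrightarrow> d j Plus > 0) \<and> (a = C2 \<longrightarrow> d j Minus > 0)"

abbreviation "sp \<equiv> slot_pmf S s c x"

lemma node_prod:
  assumes j: "j \<in> V" and i: "i \<in> S" and g: "good j a"
  shows "(\<Prod>\<sigma>\<in>NS j a. 1 - pmf (sp \<sigma>) i) = 1 - Pval S s c x a i j"
proof (cases a)
  case C1
  then have pos: "d j Plus > 0" using g by (simp add: good_def)
  have NS: "NS j a = {(j,Plus,0)}" using C1 by (simp add: NS_def)
  show ?thesis
  proof (cases "i \<in> P j Plus")
    case True
    then have sc: "\<not> s i > c j" unfolding Pcls_def by simp
    have "Pval S s c x a i j = x i j / d j Plus"
      unfolding Pval_def C1 cval.case if_not_P[OF sc] if_P[OF True] by (rule refl)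
    then show ?thesis unfolding NS using pmf_slot[OF j pos, of 0 i] True by simp
  next
    case False
    have "Pval S s c x a i j = 0"
      unfolding Pval_def C1 cval.case if_not_P[OF False] by simp
    then show ?thesis unfolding NS using pmf_slot[OF j pos, of 0 i] False by simp
  qed
next
  case C2
  then have pos: "d j Minus > 0" using g by (simp add: good_def)
  have NS: "NS j a = {(j,Minus,0),(j,Minus,1)}" using C2 by (simp add: NS_def)
  have pr: "(\<Prod>\<sigma>\<in>NS j a. 1 - pmf (sp \<sigma>) i) = (1 - pmf (sp (j,Minus,0)) i) * (1 - pmf (sp (j,Minus,1)) i)"
    unfolding NS by simp
  show ?thesis
  proof (cases "i \<in> P j Minus")
    case True
    then have "s i \<le> c j / 2" unfolding Pcls_def by simp
    then have sc: "\<not> s i > c j" using cpos[OF j] by linarith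
    have "Pval S s c x a i j = 1 - (1 - x i j / d j Minus) ^ 2"
      unfolding Pval_def C2 cval.case if_not_P[OF sc] if_P[OF True] by (rule refl)
    then show ?thesis unfolding pr using pmf_slot[OF j pos, of 0 i] pmf_slot[OF j pos, of 1 i] True
      by (simp add: power2_eq_square)
  next
    case False
    have "Pval S s c x a i j = 0"
      unfolding Pval_def C2 cval.case if_not_P[OF False] by simp
    then show ?thesis unfolding pr using pmf_slot[OF j pos, of 0 i] pmf_slot[OF j pos, of 1 i] False by simp
  qed
next
  case C3
  show ?thesis
  proof (cases "\<exists>q. 1 \<le> q \<and> i \<in> P j (Lev q)")
    case True
    then obtain q0 where q0: "1 \<le> q0" "i \<in> P j (Lev q0)" by blast
    have some: "(SOME q. 1 \<le> q \<and> i \<in> P j (Lev q)) = q0"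
    proof (rule some_equality)
      show "1 \<le> q0 \<and> i \<in> P j (Lev q0)" using q0 by simp
      fix q assume "1 \<le> q \<and> i \<in> P j (Lev q)"
      then show "q = q0" using Lev_unique[OF _ q0(1) j _ q0(2)] by blast
    qed
    have "(1/2::real) ^ (q0 - 1) \<le> 1" by (intro power_le_one) auto
    then have le1: "(1/2::real) ^ (q0 - 1) * c j * (1/4) \<le> 1 * c j * 1"
      using cpos[OF j] by (intro mult_mono) auto
    have "s i \<le> gamma_c ^ (q0 - 1) * c j * beta_c" using q0(2) unfolding Pcls_def by simp
    then have sc: "\<not> s i > c j" using le1 unfolding gamma_c_def beta_c_def by linarith
    have Pv: "Pval S s c x a i j = 1 - (1 - x i j / d j (Lev q0)) ^ n j q0"
      unfolding Pval_def C3 cval.case if_not_P[OF sc] if_P[OF True] Let_def some by (rule refl)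
    let ?f = "\<lambda>\<sigma>. 1 - pmf (sp \<sigma>) i"
    have sub: "(\<lambda>m. (j, Lev q0, m)) ` {..<n j q0} \<subseteq> NS j a"
      using C3 q0 by (auto simp: NS_def)
    have "(\<Prod>\<sigma>\<in>NS j a. ?f \<sigma>) = (\<Prod>\<sigma>\<in>(\<lambda>m. (j, Lev q0, m)) ` {..<n j q0}. ?f \<sigma>)"
    proof (rule prod.mono_neutral_right[OF finite_NS[OF j] sub])
      show "\<forall>\<sigma>\<in>NS j a - (\<lambda>m. (j, Lev q0, m)) ` {..<n j q0}. ?f \<sigma> = 1"
      proof
        fix \<sigma> assume "\<sigma> \<in> NS j a - (\<lambda>m. (j, Lev q0, m)) ` {..<n j q0}"
        then obtain q m where \<sigma>: "\<sigma> = (j, Lev q, m)" "1 \<le> q" "m < n j q" "q \<noteq> q0"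
          using C3 by (auto simp: NS_def)
        have pos: "d j (Lev q) > 0" using nn_pos_dd'[OF j] \<sigma> by simp
        have "i \<notin> P j (Lev q)" using Lev_unique[OF \<sigma>(2) q0(1) j _ q0(2)] \<sigma>(4) by blast
        then show "?f \<sigma> = 1" using pmf_slot[OF j pos] \<sigma>(1) by simp
      qed
    qed
    also have "\<dots> = (\<Prod>m<n j q0. ?f (j, Lev q0, m))"
      by (subst prod.reindex) (auto simp: inj_on_def)
    also have "\<dots> = (\<Prod>m<n j q0. 1 - x i j / d j (Lev q0))"
    proof (rule prod.cong[OF refl])
      fix m assume "m \<in> {..<n j q0}"
      then have pos: "d j (Lev q0) > 0" using nn_pos_dd'[OF j] by simp
      show "?f (j, Lev q0, m) = 1 - x i j / d j (Lev q0)" using pmf_slot[OF j pos] q0 by simp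
    qed
    also have "\<dots> = (1 - x i j / d j (Lev q0)) ^ n j q0" by simp
    finally show ?thesis using Pv by simp
  next
    case False
    have "(\<Prod>\<sigma>\<in>NS j a. 1 - pmf (sp \<sigma>) i) = (\<Prod>\<sigma>\<in>NS j a. 1)"
    proof (rule prod.cong[OF refl])
      fix \<sigma> assume "\<sigma> \<in> NS j a"
      then obtain q m where \<sigma>: "\<sigma> = (j, Lev q, m)" "1 \<le> q" "m < n j q"
        using C3 by (auto simp: NS_def)
      have pos: "d j (Lev q) > 0" using nn_pos_dd'[OF j] \<sigma> by simp
      show "1 - pmf (sp \<sigma>) i = 1" using pmf_slot[OF j pos] \<sigma> False by auto
    qed
    moreover have "Pval S s c x a i j = 0"
      unfolding Pval_def C3 cval.case if_not_P[OF False] by simp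
    ultimately show ?thesis by simp
  qed
qed

end



lemma Pi_pmf_nohit:
  assumes fin: "finite L"
  shows "measure (Pi_pmf L dflt Q) {\<tau>. \<forall>\<sigma>\<in>L. fst \<sigma> \<in> A \<longrightarrow> \<tau> \<sigma> \<noteq> i}
       = (\<Prod>\<sigma>\<in>L. if fst \<sigma> \<in> A then 1 - pmf (Q \<sigma>) i else 1)"
proof -
  let ?B = "\<lambda>\<sigma>. if fst \<sigma> \<in> A then UNIV - {i} else UNIV"
  have "{\<tau>. \<forall>\<sigma>\<in>L. fst \<sigma> \<in> A \<longrightarrow> \<tau> \<sigma> \<noteq> i} = Pi L ?B" by (auto simp: Pi_def)
  then have "measure (Pi_pmf L dflt Q) {\<tau>. \<forall>\<sigma>\<in>L. fst \<sigma> \<in> A \<longrightarrow> \<tau> \<sigma> \<noteq> i}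
     = (\<Prod>\<sigma>\<in>L. measure (Q \<sigma>) (?B \<sigma>))" using measure_Pi_pmf_Pi[OF fin] by simp
  also have "\<dots> = (\<Prod>\<sigma>\<in>L. if fst \<sigma> \<in> A then 1 - pmf (Q \<sigma>) i else 1)"
  proof (rule prod.cong[OF refl])
    fix \<sigma>
    have "measure (Q \<sigma>) (UNIV - {i}) = 1 - pmf (Q \<sigma>) i"
      using measure_pmf.prob_compl[of "{i}" "Q \<sigma>"] by (simp add: measure_pmf_single)
    then show "measure (Q \<sigma>) (?B \<sigma>) = (if fst \<sigma> \<in> A then 1 - pmf (Q \<sigma>) i else 1)" by simp
  qed
  finally show ?thesis .
qed

lemma cond_pmf_UNIV: "cond_pmf p UNIV = p"
  by (rule pmf_eqI) (use pmf_cond[of p UNIV] set_pmf_not_empty[of p] in simp)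

lemma cond_pmf_single: "a \<in> set_pmf p \<Longrightarrow> cond_pmf p {a} = return_pmf a"
  by (rule pmf_eqI) (auto simp: pmf_cond measure_pmf_single set_pmf_iff)

lemma expect_one_minus_ind:
  "measure_pmf.expectation p (\<lambda>t. 1 - indicator N t) = 1 - measure p N"
proof -
  have "(\<lambda>t. 1 - indicator N t :: real) = indicator (UNIV - N)" by (auto simp: indicator_def)
  then show ?thesis using measure_pmf.prob_compl[of N p] by simp
qed

context spsc begin

lemma NS_fst: "\<sigma> \<in> NS j a \<Longrightarrow> fst \<sigma> = j"
  by (cases a) (auto simp: NS_def)

lemma nohit:
  assumes gz: "\<forall>j\<in>V. good j (\<zeta> j)" and i: "i \<in> S" and A: "A \<subseteq> V"
  shows "measure (tau_pmf S s c x V \<zeta>) {\<tau>. \<forall>\<sigma>\<in>slots S s c x V \<zeta>. fst \<sigma> \<in> A \<longrightarrow> \<tau> \<sigma> \<noteq> i}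
     = (\<Prod>j\<in>A. 1 - Pval S s c x (\<zeta> j) i j)"
proof -
  let ?L = "slots S s c x V \<zeta>"
  let ?F = "\<lambda>\<sigma>. if fst \<sigma> \<in> A then 1 - pmf (sp \<sigma>) i else 1"
  have "measure (tau_pmf S s c x V \<zeta>) {\<tau>. \<forall>\<sigma>\<in>?L. fst \<sigma> \<in> A \<longrightarrow> \<tau> \<sigma> \<noteq> i} = (\<Prod>\<sigma>\<in>?L. ?F \<sigma>)"
    unfolding tau_pmf_def by (rule Pi_pmf_nohit[OF slots_finite])
  also have "\<dots> = (\<Prod>j\<in>V. \<Prod>\<sigma>\<in>{\<sigma>\<in>?L. fst \<sigma> = j}. ?F \<sigma>)"
    by (rule prod.group[symmetric, OF slots_finite finV]) (use slots_fst in auto)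
  also have "\<dots> = (\<Prod>j\<in>V. if j \<in> A then 1 - Pval S s c x (\<zeta> j) i j else 1)"
  proof (rule prod.cong[OF refl])
    fix j assume j: "j \<in> V"
    have "(\<Prod>\<sigma>\<in>{\<sigma>\<in>?L. fst \<sigma> = j}. ?F \<sigma>) = (\<Prod>\<sigma>\<in>NS j (\<zeta> j). ?F \<sigma>)"
      using slots_at[OF j] by simp
    also have "\<dots> = (\<Prod>\<sigma>\<in>NS j (\<zeta> j). if j \<in> A then 1 - pmf (sp \<sigma>) i else 1)"
      by (rule prod.cong[OF refl]) (auto dest: NS_fst)
    also have "\<dots> = (if j \<in> A then 1 - Pval S s c x (\<zeta> j) i j else 1)"
      using node_prod[OF j i] gz j by auto
    finally show "(\<Prod>\<sigma>\<in>{\<sigma>\<in>?L. fst \<sigma> = j}. ?F \<sigma>) = (if j \<in> A then 1 - Pval S s c x (\<zeta> j) i j else 1)" .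
  qed
  also have "\<dots> = (\<Prod>j\<in>V \<inter> A. 1 - Pval S s c x (\<zeta> j) i j)"
    by (rule prod.inter_restrict[symmetric, OF finV])
  also have "V \<inter> A = A" using A by blast
  finally show ?thesis .
qed

lemma ftau_eq:
  "ftau L \<tau> svc T k = 1 - indicator {\<tau>. \<forall>\<sigma>\<in>L. fst \<sigma> \<in> T k \<longrightarrow> \<tau> \<sigma> \<noteq> svc k} \<tau>"
  by (auto simp: ftau_def Xset_def indicator_def)

lemma good_node: assumes j: "j \<in> V" and a: "a \<in> set_pmf (node_pmf S s c x j)" shows "good j a"
proof -
  have p: "pmf (node_pmf S s c x j) a > 0" using a by (rule pmf_positive)
  show ?thesis
  proof (cases a)
    case C1
    then have "delta_c * d j Plus > 0" using p pmf_node[OF j, of a] by simp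
    then show ?thesis using C1 by (simp add: good_def delta_c_def)
  next
    case C2
    then have "delta_c * h j > 0" using p pmf_node[OF j, of a] by simp
    then have "h j > 0" by (simp add: delta_c_def)
    then show ?thesis using C2 hh_pos_iff[OF j] by (simp add: good_def)
  qed (simp add: good_def)
qed

lemma one_minus_Pval_nonneg:
  assumes "j \<in> V" "i \<in> S" "good j a" shows "0 \<le> 1 - Pval S s c x a i j"
  unfolding node_prod[OF assms, symmetric] by (intro prod_nonneg) (auto simp: pmf_le_1)

end



context spsc begin

abbreviation "nd j \<equiv> node_pmf S s c x j"

lemma finite_set_pmf_cval: "finite (set_pmf (p :: cval pmf))"
  by (rule finite_subset[OF subset_UNIV]) simp

lemma node_expect:
  assumes j: "j \<in> V" and i: "i \<in> S"
  shows "measure_pmf.expectation (nd j) (\<lambda>a. 1 - Pval S s c x a i j) = 1 - Pgen S s c x None i j"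
proof -
  have "measure_pmf.expectation (nd j) (\<lambda>a. 1 - Pval S s c x a i j)
      = (\<Sum>a\<in>UNIV. (1 - Pval S s c x a i j) * pmf (nd j) a)"
    by (rule integral_measure_pmf_real) auto
  also have "\<dots> = 1 - Pgen S s c x None i j"
    by (simp add: UNIV_cval pmf_node[OF j] Pgen_def algebra_simps)
  finally show ?thesis .
qed

lemma main:
  assumes pos: "measure_pmf.prob (zeta_pmf S s c x V) (Mset V \<zeta>') > 0"
  shows "Eprime S s c x V U svc T w \<zeta>' =
    (\<Sum>k\<in>U. w k * (1 - (\<Prod>j\<in>T k. 1 - Pgen S s c x (\<zeta>' j) (svc k) j)))"
proof -
  let ?Z = "zeta_pmf S s c x V"
  let ?K = "tau_pmf S s c x V"
  let ?M = "Mset V \<zeta>'"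
  define B where "B j = (case \<zeta>' j of None \<Rightarrow> UNIV | Some a \<Rightarrow> {a})" for j
  let ?N = "\<lambda>j. cond_pmf (nd j) (B j)"
  let ?L = "slots S s c x V"
  have M: "?M = Pi V B" by (auto simp: Mset_def B_def Pi_def split: option.splits)
  have Z: "?Z = Pi_pmf V C3 nd" by (simp add: zeta_pmf_def)
  have mZ: "measure ?Z ?M = (\<Prod>j\<in>V. measure (nd j) (B j))"
    unfolding M Z by (rule measure_Pi_pmf_Pi[OF finV])
  have ne: "set_pmf (nd j) \<inter> B j \<noteq> {}" if j: "j \<in> V" for j
  proof
    assume "set_pmf (nd j) \<inter> B j = {}"
    then have "measure (nd j) (B j) = 0" by (simp add: measure_pmf_zero_iff)
    then have "measure ?Z ?M = 0" unfolding mZ using j finV by (auto simp: prod_zero_iff)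
    then show False using pos by simp
  qed
  have neZ: "set_pmf ?Z \<inter> ?M \<noteq> {}" using pos measure_pmf_zero_iff[of ?Z ?M] by auto
  have condZ: "cond_pmf ?Z ?M = Pi_pmf V C3 ?N"
    unfolding M Z by (rule cond_Pi_pmf[OF finV ne])
  have Nsub: "set_pmf (?N j) \<subseteq> set_pmf (nd j)" if "j \<in> V" for j
    using ne[OF that] by simp
  have goodZ: "\<forall>j\<in>V. good j (\<zeta> j)" if "\<zeta> \<in> set_pmf (cond_pmf ?Z ?M)" for \<zeta>
  proof
    fix j assume j: "j \<in> V"
    have "\<zeta> \<in> set_pmf (Pi_pmf V C3 ?N)" using that condZ by simp
    then have "\<zeta> \<in> PiE_dflt V C3 (set_pmf \<circ> ?N)" using set_Pi_pmf[OF finV, of C3 ?N] by blast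
    then have "\<zeta> j \<in> set_pmf (?N j)" using j unfolding PiE_dflt_def o_def by blast
    then show "good j (\<zeta> j)" using good_node[OF j] Nsub[OF j] by blast
  qed
  have finCZ: "finite (set_pmf (cond_pmf ?Z ?M))"
    unfolding condZ set_Pi_pmf[OF finV]
    by (rule finite_PiE_dflt[OF finV]) (simp add: finite_set_pmf_cval)
  define F where "F k = (\<lambda>p. ftau (?L (fst p)) (snd p) svc T k)" for k
  have F01: "0 \<le> F k p" "F k p \<le> 1" for k p by (auto simp: F_def ftau_def)
  let ?E = "bind_pmf (cond_pmf ?Z ?M) (\<lambda>z. map_pmf (Pair z) (?K z))"
  have "Eprime S s c x V U svc T w \<zeta>' = measure_pmf.expectation ?E (\<lambda>p. \<Sum>k\<in>U. F k p * w k)"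
    unfolding Eprime_def spsc_experiment_def cond_bind_pair[OF neZ] total_reward_def F_def
    by (simp add: case_prod_beta')
  also have "\<dots> = (\<Sum>k\<in>U. measure_pmf.expectation ?E (\<lambda>p. F k p * w k))"
    by (rule Bochner_Integration.integral_sum)
       (intro integrable_mult_left measure_pmf.integrable_const_bound[where B=1], use F01 in auto)
  also have "\<dots> = (\<Sum>k\<in>U. w k * measure_pmf.expectation ?E (F k))"
    by (simp add: mult.commute)
  also have "\<dots> = (\<Sum>k\<in>U. w k * (1 - (\<Prod>j\<in>T k. 1 - Pgen S s c x (\<zeta>' j) (svc k) j)))"
  proof (rule sum.cong[OF refl])
    fix k assume k: "k \<in> U"
    let ?i = "svc k"
    have i: "?i \<in> S" using svcS[OF k] .
    have TkV: "T k \<subseteq> V" using TV[OF k] .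
    have "measure_pmf.expectation ?E (F k)
        = measure_pmf.expectation (cond_pmf ?Z ?M) (\<lambda>z. measure_pmf.expectation (?K z) (\<lambda>t. F k (z, t)))"
      by (subst integral_bind_pmf_bounded[where B=1]) (use F01 in auto)
    also have "\<dots> = measure_pmf.expectation (cond_pmf ?Z ?M) (\<lambda>z. 1 - (\<Prod>j\<in>T k. 1 - Pval S s c x (z j) ?i j))"
    proof (rule integral_cong_AE)
      show "AE z in measure_pmf (cond_pmf ?Z ?M). measure_pmf.expectation (?K z) (\<lambda>t. F k (z, t))
              = 1 - (\<Prod>j\<in>T k. 1 - Pval S s c x (z j) ?i j)"
      proof (rule AE_pmfI)
        fix z assume z: "z \<in> set_pmf (cond_pmf ?Z ?M)"
        have "measure_pmf.expectation (?K z) (\<lambda>t. F k (z, t))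
            = measure_pmf.expectation (?K z) (\<lambda>t. 1 - indicator {\<tau>. \<forall>\<sigma>\<in>?L z. fst \<sigma> \<in> T k \<longrightarrow> \<tau> \<sigma> \<noteq> ?i} t)"
          unfolding F_def fst_conv snd_conv ftau_eq ..
        also have "\<dots> = 1 - (\<Prod>j\<in>T k. 1 - Pval S s c x (z j) ?i j)"
          unfolding expect_one_minus_ind nohit[OF goodZ[OF z] i TkV] ..
        finally show "measure_pmf.expectation (?K z) (\<lambda>t. F k (z, t)) = 1 - (\<Prod>j\<in>T k. 1 - Pval S s c x (z j) ?i j)" .
      qed
    qed auto
    also have "\<dots> = 1 - measure_pmf.expectation (cond_pmf ?Z ?M) (\<lambda>z. \<Prod>j\<in>T k. 1 - Pval S s c x (z j) ?i j)"
      by (subst Bochner_Integration.integral_diff) (auto intro!: integrable_measure_pmf_finite finCZ)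
    also have "(\<lambda>z. \<Prod>j\<in>T k. 1 - Pval S s c x (z j) ?i j)
        = (\<lambda>z. \<Prod>j\<in>V. (if j \<in> T k then 1 - Pval S s c x (z j) ?i j else 1))"
    proof
      fix z
      have "(\<Prod>j\<in>V. (if j \<in> T k then 1 - Pval S s c x (z j) ?i j else 1))
          = (\<Prod>j\<in>V \<inter> T k. 1 - Pval S s c x (z j) ?i j)"
        by (rule prod.inter_restrict[symmetric, OF finV])
      also have "V \<inter> T k = T k" using TkV by blast
      finally show "(\<Prod>j\<in>T k. 1 - Pval S s c x (z j) ?i j)
          = (\<Prod>j\<in>V. (if j \<in> T k then 1 - Pval S s c x (z j) ?i j else 1))" by simp
    qed
    also have "measure_pmf.expectation (cond_pmf ?Z ?M) (\<lambda>z. \<Prod>j\<in>V. (if j \<in> T k then 1 - Pval S s c x (z j) ?i j else 1))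
        = (\<Prod>j\<in>V. measure_pmf.expectation (?N j) (\<lambda>a. if j \<in> T k then 1 - Pval S s c x a ?i j else 1))"
      unfolding condZ
    proof (rule expectation_prod_Pi_pmf[OF finV])
      show "integrable (measure_pmf (?N j)) (\<lambda>a. if j \<in> T k then 1 - Pval S s c x a ?i j else 1)" for j
        by (rule integrable_measure_pmf_finite) (rule finite_set_pmf_cval)
      show "0 \<le> (if j \<in> T k then 1 - Pval S s c x a ?i j else 1)" if "j \<in> V" "a \<in> set_pmf (?N j)" for j a
        using one_minus_Pval_nonneg[OF that(1) i good_node[OF that(1)]] Nsub[OF that(1)] that(2) by auto
    qed
    also have "\<dots> = (\<Prod>j\<in>V. if j \<in> T k then 1 - Pgen S s c x (\<zeta>' j) ?i j else 1)"
    proof (rule prod.cong[OF refl])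
      fix j assume j: "j \<in> V"
      show "measure_pmf.expectation (?N j) (\<lambda>a. if j \<in> T k then 1 - Pval S s c x a ?i j else 1)
          = (if j \<in> T k then 1 - Pgen S s c x (\<zeta>' j) ?i j else 1)"
      proof (cases "j \<in> T k")
        case True
        show ?thesis
        proof (cases "\<zeta>' j")
          case None
          then have "?N j = nd j" by (simp add: B_def cond_pmf_UNIV)
          then show ?thesis using True None node_expect[OF j i] by simp
        next
          case (Some a)
          then have "a \<in> set_pmf (nd j)" using ne[OF j] by (auto simp: B_def)
          then have "?N j = return_pmf a" using Some by (simp add: B_def cond_pmf_single)
          then show ?thesis using True Some by (simp add: Pgen_def)
        qed
      qed simp
    qed
    also have "\<dots> = (\<Prod>j\<in>V \<inter> T k. 1 - Pgen S s c x (\<zeta>' j) ?i j)"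
      by (rule prod.inter_restrict[symmetric, OF finV])
    also have "V \<inter> T k = T k" using TkV by blast
    finally show "w k * measure_pmf.expectation ?E (F k) = w k * (1 - (\<Prod>j\<in>T k. 1 - Pgen S s c x (\<zeta>' j) (svc k) j))"
      by simp
  qed
  finally show ?thesis .
qed

end


theorem theorem14:
  fixes S :: "'s set" and V :: "'v set" and U :: "'u set"
    and s :: "'s \<Rightarrow> real" and c :: "'v \<Rightarrow> real"
    and svc :: "'u \<Rightarrow> 's" and T :: "'u \<Rightarrow> 'v set" and w :: "'u \<Rightarrow> real"
    and x :: "'s \<Rightarrow> 'v \<Rightarrow> real" and y :: "'u \<Rightarrow> real"
    and \<zeta>' :: "'v \<Rightarrow> cval option"
  assumes "spsc_instance S V U s c svc T w"
    and "lp_optimal S V U s c svc T w x y"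
    and "measure_pmf.prob (zeta_pmf S s c x V) (Mset V \<zeta>') > 0"
  shows "Eprime S s c x V U svc T w \<zeta>' =
    (\<Sum>k\<in>U. w k * (1 - (\<Prod>j\<in>T k. 1 - Pgen S s c x (\<zeta>' j) (svc k) j)))"
proof -
  interpret spsc S V U s c svc T w x y
    using assms(1,2) by (unfold_locales) (auto simp: lp_optimal_def)
  show ?thesis using main[OF assms(3)] .
qed

end
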